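(* There exists an absolute constant $C_3<1$ such that the following holds. Let $0<\lambda\leq \frac{9}{10}$, let $p$ be a prime with $p> \frac{2}{\lambda}$, and let $Y_1,Y_2,Y_3$ be independent, identically distributed random variables taking values in $\mathbb{Z}_p$ such that $$\max_{x\in \mathbb{Z}_p} \mathbb{P}[Y_1=x]\leq \lambda.$$ Set $Y=Y_1+Y_2+Y_3$ (sum in $\mathbb{Z}_p$). Then $$\max_{x\in \mathbb{Z}_p} \mathbb{P}[Y=x]\leq C_3\lambda.$$
   Context: $\mathbb{Z}_p$ denotes the cyclic group of integers modulo the prime $p$. *)

theory Defs
  imports "HOL-Probability.Probability" "HOL-Computational_Algebra.Primes"
begin

text \<open>Elements of Z_p are represented by the integers 0..p-1. A Z_p-valued random
variable is represented by its law, an int pmf supported in {0..<p}.\<close>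

definition sum3_law :: "nat \<Rightarrow> int pmf \<Rightarrow> int pmf" where
  "sum3_law p q =
     bind_pmf q (\<lambda>y1. bind_pmf q (\<lambda>y2. bind_pmf q (\<lambda>y3.
       return_pmf ((y1 + y2 + y3) mod int p))))"

end

theory Submission
  imports Defs
begin
lemma modS: "0 < p \<Longrightarrow> (c::int) mod int p \<in> {0..<int p}"
  by simp

lemma inj_plus: "inj_on (\<lambda>z. (c + z) mod int p) {0..<int p}"
proof (rule inj_onI)
  fix z1 z2 assume a: "z1 \<in> {0..<int p}" "z2 \<in> {0..<int p}" "(c + z1) mod int p = (c + z2) mod int p"
  have "z1 = ((c + z1) mod int p - c) mod int p" using a(1) by (simp add: mod_diff_left_eq)
  also have "\<dots> = ((c + z2) mod int p - c) mod int p" using a(3) by simp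
  also have "\<dots> = z2" using a(2) by (simp add: mod_diff_left_eq)
  finally show "z1 = z2" .
qed

lemma inj_minus: "inj_on (\<lambda>z. (c - z) mod int p) {0..<int p}"
proof (rule inj_onI)
  fix z1 z2 assume a: "z1 \<in> {0..<int p}" "z2 \<in> {0..<int p}" "(c - z1) mod int p = (c - z2) mod int p"
  have "z1 = (c - (c - z1) mod int p) mod int p" using a(1) by (simp add: mod_diff_right_eq)
  also have "\<dots> = (c - (c - z2) mod int p) mod int p" using a(3) by simp
  also have "\<dots> = z2" using a(2) by (simp add: mod_diff_right_eq)
  finally show "z1 = z2" .
qed

lemma image_full:
  assumes "inj_on h {0..<int p}" "\<And>z. h z \<in> {0..<int p}"
  shows "h ` {0..<int p} = {0..<int p}"
proof -
  have "h ` {0..<int p} \<subseteq> {0..<int p}" using assms(2) by auto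
  moreover have "card (h ` {0..<int p}) = card {0..<int p}" using assms(1) card_image by blast
  ultimately show ?thesis by (simp add: card_subset_eq)
qed

lemma reidx_plus:
  assumes "0 < p"
  shows "(\<Sum>z\<in>{0..<int p}. F ((c + z) mod int p)) = (\<Sum>y\<in>{0..<int p}. F y)"
proof -
  have "(\<Sum>y\<in>{0..<int p}. F y) = (\<Sum>y\<in>(\<lambda>z. (c + z) mod int p) ` {0..<int p}. F y)"
    using image_full[OF inj_plus[where c=c and p=p]] assms by simp
  also have "\<dots> = (\<Sum>z\<in>{0..<int p}. F ((c + z) mod int p))"
    by (subst sum.reindex[OF inj_plus]) simp
  finally show ?thesis by simp
qed

lemma reidx_minus:
  assumes "0 < p"
  shows "(\<Sum>z\<in>{0..<int p}. F ((c - z) mod int p)) = (\<Sum>y\<in>{0..<int p}. F y)"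
proof -
  have "(\<Sum>y\<in>{0..<int p}. F y) = (\<Sum>y\<in>(\<lambda>z. (c - z) mod int p) ` {0..<int p}. F y)"
    using image_full[OF inj_minus[where c=c and p=p]] assms by simp
  also have "\<dots> = (\<Sum>z\<in>{0..<int p}. F ((c - z) mod int p))"
    by (subst sum.reindex[OF inj_minus]) simp
  finally show ?thesis by simp
qed

lemma closed_full:
  assumes p: "prime p" and AS: "A \<subseteq> {0..<int p}" and a0: "a0 \<in> A"
    and cl: "\<And>a. a \<in> A \<Longrightarrow> (a + d) mod int p \<in> A" and nd: "\<not> int p dvd d"
  shows "A = {0..<int p}"
proof
  show "A \<subseteq> {0..<int p}" by (rule AS)
  have it: "(a0 + int k * d) mod int p \<in> A" for k
  proof (induction k)
    case 0 then show ?case using a0 AS by auto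
  next
    case (Suc k)
    have "(a0 + int (Suc k) * d) mod int p = ((a0 + int k * d) mod int p + d) mod int p"
    proof -
      have "a0 + int (Suc k) * d = (a0 + int k * d) + d" by (simp add: algebra_simps)
      then show ?thesis by (metis mod_add_left_eq)
    qed
    then show ?case using cl[OF Suc] by simp
  qed
  have pi: "prime (int p)" using p by simp
  have "coprime d (int p)" using prime_imp_coprime[OF pi nd] by (simp add: coprime_commute)
  then have g1: "gcd d (int p) = 1" by simp
  obtain u v where uv: "u * d + v * int p = 1" using bezout_int[of d "int p"] g1 by auto
  show "{0..<int p} \<subseteq> A"
  proof
    fix y assume y: "y \<in> {0..<int p}"
    define k0 where "k0 = ((y - a0) * u) mod int p"
    have pp: "int p > 0" using p prime_gt_0_nat by auto
    have k0: "k0 \<ge> 0" using pp k0_def by simp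
    have "int p dvd (a0 + k0 * d - y)"
    proof -
      define t where "t = ((y - a0) * u) div int p"
      have k0e: "k0 = (y - a0) * u - int p * t"
        unfolding k0_def t_def by (simp add: minus_div_mult_eq_mod [symmetric] algebra_simps)
      have ud: "u * d = 1 - v * int p" using uv by linarith
      have "a0 + k0 * d - y = (y - a0) * (u * d) - (y - a0) - int p * t * d"
        unfolding k0e by (simp add: algebra_simps)
      also have "\<dots> = int p * (- (y - a0) * v - t * d)"
        unfolding ud by (simp add: algebra_simps)
      finally show ?thesis by simp
    qed
    then have "(a0 + k0 * d) mod int p = y mod int p"
      by (simp add: mod_eq_dvd_iff)
    also have "\<dots> = y" using y by simp
    finally have "(a0 + int (nat k0) * d) mod int p = y" using k0 by simp
    then show "y \<in> A" using it[of "nat k0"] by simp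
  qed
qed



definition sset :: "nat \<Rightarrow> int set \<Rightarrow> int set \<Rightarrow> int set" where
  "sset p A B = (\<lambda>(a,b). (a + b) mod int p) ` (A \<times> B)"

lemma sset_sub: "0 < p \<Longrightarrow> sset p A B \<subseteq> {0..<int p}"
  unfolding sset_def by auto

lemma cauchy_davenport:
  assumes p: "prime p"
  shows "A \<subseteq> {0..<int p} \<Longrightarrow> B \<subseteq> {0..<int p} \<Longrightarrow> A \<noteq> {} \<Longrightarrow> B \<noteq> {} \<Longrightarrow>
    min p (card A + card B - 1) \<le> card (sset p A B)"
proof (induction "card B" arbitrary: A B rule: less_induct)
  case less
  have pp: "0 < p" using p prime_gt_0_nat by auto
  have finA: "finite A" using less.prems(1) finite_subset by blast
  have finB: "finite B" using less.prems(2) finite_subset by blast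
  have finS: "finite (sset p A B)" using sset_sub[OF pp] finite_subset by blast
  have cB: "card B \<ge> 1" using finB less.prems(4) by (simp add: Suc_le_eq card_gt_0_iff)
  show ?case
  proof (cases "card B = 1")
    case True
    then obtain b where Bb: "B = {b}" by (auto simp: card_Suc_eq)
    have "sset p A B = (\<lambda>a. (b + a) mod int p) ` A"
      unfolding sset_def Bb by (auto simp: add.commute)
    moreover have "inj_on (\<lambda>a. (b + a) mod int p) A"
      using inj_on_subset[OF inj_plus less.prems(1)] .
    ultimately have "card (sset p A B) = card A" by (simp add: card_image)
    then show ?thesis using True by simp
  next
    case False
    with cB have cB2: "card B \<ge> 2" by simp
    show ?thesis
    proof (cases "\<exists>a\<in>A. \<exists>b\<in>B. \<exists>b'\<in>B. (a + b' - b) mod int p \<notin> A")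
      case True
      then obtain a b b' where ab: "a \<in> A" "b \<in> B" "b' \<in> B" "(a + b' - b) mod int p \<notin> A" by blast
      define e where "e = a - b"
      define h where "h = (\<lambda>c. (e + c) mod int p)"
      define A' where "A' = A \<union> h ` B"
      define B' where "B' = {c\<in>B. h c \<in> A}"
      have aS: "a \<in> {0..<int p}" using ab less.prems(1) by auto
      have hb: "h b = a" unfolding h_def e_def using aS by simp
      have bB': "b \<in> B'" unfolding B'_def using ab hb by simp
      have b'B': "b' \<notin> B'" unfolding B'_def h_def e_def using ab by (simp add: algebra_simps)
      have B'B: "B' \<subset> B" using b'B' ab(3) unfolding B'_def by auto
      have cB'lt: "card B' < card B" using B'B finB psubset_card_mono by blast
      have A'S: "A' \<subseteq> {0..<int p}" unfolding A'_def h_def using less.prems(1) pp by auto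
      have B'S: "B' \<subseteq> {0..<int p}" using B'B less.prems(2) by auto
      have A'ne: "A' \<noteq> {}" using less.prems(3) unfolding A'_def by auto
      have B'ne: "B' \<noteq> {}" using bB' by auto
      have IH: "min p (card A' + card B' - 1) \<le> card (sset p A' B')"
        using less.hyps[OF cB'lt A'S B'S A'ne B'ne] .
      have injh: "inj_on h B" unfolding h_def using inj_on_subset[OF inj_plus less.prems(2)] .
      have A'eq: "A' = A \<union> h ` (B - B')" unfolding A'_def B'_def by auto
      have disj: "A \<inter> h ` (B - B') = {}" unfolding B'_def by auto
      have "card A' = card A + card (h ` (B - B'))"
        unfolding A'eq by (rule card_Un_disjoint[OF finA _ disj]) (use finB in simp)
      also have "card (h ` (B - B')) = card (B - B')"
        using inj_on_subset[OF injh] by (simp add: card_image)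
      also have "\<dots> = card B - card B'" using B'B finB by (meson card_Diff_subset finite_subset psubset_imp_subset)
      finally have cA': "card A' + card B' = card A + card B"
        using B'B finB card_mono[OF finB] by (metis add.commute le_add_diff_inverse2 less_imp_le psubset_imp_subset add.assoc)
      have sub: "sset p A' B' \<subseteq> sset p A B"
      proof
        fix s assume "s \<in> sset p A' B'"
        then obtain x c where xc: "x \<in> A'" "c \<in> B'" "s = (x + c) mod int p" unfolding sset_def by auto
        show "s \<in> sset p A B"
        proof (cases "x \<in> A")
          case True
          then show ?thesis using xc B'B unfolding sset_def by auto
        next
          case False
          then obtain c2 where c2: "c2 \<in> B" "x = h c2" using xc(1) unfolding A'_def by auto
          have "s = (h c + c2) mod int p" unfolding xc(3) c2(2) h_def
            by (simp add: mod_add_left_eq mod_add_right_eq algebra_simps)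
          moreover have "h c \<in> A" using xc(2) unfolding B'_def by auto
          ultimately show ?thesis using c2(1) unfolding sset_def by auto
        qed
      qed
      have "card (sset p A' B') \<le> card (sset p A B)" using card_mono[OF finS sub] .
      then show ?thesis using IH cA' by simp
    next
      case False
      obtain b b' where bb: "b \<in> B" "b' \<in> B" "b \<noteq> b'"
      proof -
        have "\<not> card B \<le> Suc 0" using cB2 by simp
        then have "\<not> (\<forall>x\<in>B. \<forall>y\<in>B. x = y)" using card_le_Suc0_iff_eq[OF finB] by simp
        then show ?thesis using that by blast
      qed
      have bS: "b \<in> {0..<int p}" "b' \<in> {0..<int p}" using bb less.prems(2) by auto
      have nd: "\<not> int p dvd (b' - b)"
      proof
        assume "int p dvd (b' - b)"
        then have "b' mod int p = b mod int p" by (simp add: mod_eq_dvd_iff)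
        then show False using bS bb(3) by simp
      qed
      obtain a0 where a0: "a0 \<in> A" using less.prems(3) by auto
      have cl: "\<And>a. a \<in> A \<Longrightarrow> (a + (b' - b)) mod int p \<in> A"
        using False bb by (auto simp: algebra_simps)
      have AS: "A = {0..<int p}" using closed_full[OF p less.prems(1) a0 cl nd] .
      have "{0..<int p} \<subseteq> sset p A B"
      proof
        fix y assume y: "y \<in> {0..<int p}"
        have "y = ((y - b) mod int p + b) mod int p" using y by (simp add: mod_add_left_eq)
        moreover have "(y - b) mod int p \<in> A" using AS pp by simp
        ultimately show "y \<in> sset p A B" using bb(1) unfolding sset_def by force
      qed
      then have "card {0..<int p} \<le> card (sset p A B)" using card_mono[OF finS] by blast
      then show ?thesis by simp
    qed
  qed
qed


lemma pmf_bind_fin: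
  assumes "set_pmf q \<subseteq> S" "finite S"
  shows "pmf (bind_pmf q f) x = (\<Sum>y\<in>S. pmf q y * pmf (f y) x)"
  unfolding pmf_bind
  by (subst integral_measure_pmf[of S]) (use assms in auto)

lemma inner_delta:
  assumes pp: "0 < p" and sq: "set_pmf q \<subseteq> {0..<int p}" and x: "x \<in> {0..<int p}"
  shows "pmf (bind_pmf q (\<lambda>c. return_pmf ((t + c) mod int p))) x = pmf q ((x - t) mod int p)"
proof -
  have key: "((t + c) mod int p = x) = (c = (x - t) mod int p)" if c: "c \<in> {0..<int p}" for c
  proof
    assume h: "(t + c) mod int p = x"
    have "(x - t) mod int p = ((t + c) mod int p - t) mod int p" using h by simp
    also have "\<dots> = c" using c by (simp add: mod_diff_left_eq)
    finally show "c = (x - t) mod int p" by simp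
  next
    assume h: "c = (x - t) mod int p"
    have "(t + c) mod int p = (t + (x - t)) mod int p" unfolding h by (simp add: mod_add_right_eq)
    also have "\<dots> = x" using x by simp
    finally show "(t + c) mod int p = x" .
  qed
  have "pmf (bind_pmf q (\<lambda>c. return_pmf ((t + c) mod int p))) x
      = (\<Sum>c\<in>{0..<int p}. pmf q c * indicator {x} ((t + c) mod int p))"
    by (subst pmf_bind_fin[OF sq]) (simp_all add: pmf_return)
  also have "\<dots> = (\<Sum>c\<in>{0..<int p}. if c = (x - t) mod int p then pmf q c else 0)"
    by (rule sum.cong) (auto simp: key indicator_def)
  also have "\<dots> = pmf q ((x - t) mod int p)" using pp by simp
  finally show ?thesis .
qed

lemma pmf_sum3:
  assumes pp: "0 < p" and sq: "set_pmf q \<subseteq> {0..<int p}" and x: "x \<in> {0..<int p}"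
  shows "pmf (sum3_law p q) x = (\<Sum>a\<in>{0..<int p}. pmf q a *
            (\<Sum>b\<in>{0..<int p}. pmf q b * pmf q ((x - a - b) mod int p)))"
proof -
  have "pmf (sum3_law p q) x = (\<Sum>a\<in>{0..<int p}. pmf q a * (\<Sum>b\<in>{0..<int p}. pmf q b *
     pmf (bind_pmf q (\<lambda>c. return_pmf ((a + b + c) mod int p))) x))"
    unfolding sum3_law_def
    by (simp add: pmf_bind_fin[OF sq])
  also have "\<dots> = (\<Sum>a\<in>{0..<int p}. pmf q a *
            (\<Sum>b\<in>{0..<int p}. pmf q b * pmf q ((x - a - b) mod int p)))"
    by (simp add: inner_delta[OF pp sq x] diff_diff_eq)
  finally show ?thesis .
qed


lemma main_bound:
  assumes lam: "0 < lam" "lam \<le> 9/10" and p: "prime p" and pl: "real p > 2 / lam"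
    and sq: "set_pmf q \<subseteq> {0..<int p}" and ql: "\<forall>x\<in>{0..<int p}. pmf q x \<le> lam"
    and x: "x \<in> {0..<int p}"
  shows "pmf (sum3_law p q) x \<le> (1 - 1/10000) * lam"
proof (rule ccontr)
  assume "\<not> ?thesis"
  then have big: "pmf (sum3_law p q) x > (1 - 1/10000) * lam" by simp
  define S where "S = {0..<int p}"
  define Q where "Q = pmf q"
  have pp: "0 < p" using p prime_gt_0_nat by auto
  have finS: "finite S" unfolding S_def by simp
  have Q0: "Q y \<ge> 0" for y unfolding Q_def by simp
  have Ql: "Q y \<le> lam" for y
  proof (cases "y \<in> S")
    case True then show ?thesis using ql unfolding Q_def S_def by auto
  next
    case False
    then have "y \<notin> set_pmf q" using sq unfolding S_def by auto
    then have "pmf q y = 0" by (simp add: set_pmf_iff)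
    then show ?thesis using lam unfolding Q_def by simp
  qed
  have sumQ: "sum Q S = 1" unfolding Q_def S_def using sum_pmf_eq_1[OF _ sq] by simp
  have sumr: "(\<Sum>z\<in>S. Q ((c - z) mod int p)) = 1" for c
    unfolding S_def using reidx_minus[OF pp, of Q c] sumQ S_def by simp
  define g where "g a = (\<Sum>b\<in>S. Q b * Q ((x - a - b) mod int p))" for a
  have f_eq: "pmf (sum3_law p q) x = (\<Sum>a\<in>S. Q a * g a)"
    unfolding g_def S_def Q_def using pmf_sum3[OF pp sq x] .
  have gl: "g a \<le> lam" for a
  proof -
    have "g a \<le> (\<Sum>b\<in>S. Q b * lam)" unfolding g_def
      by (rule sum_mono) (simp add: Q0 Ql mult_left_mono)
    also have "\<dots> = lam" using sumQ by (simp add: sum_distrib_right[symmetric])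
    finally show ?thesis .
  qed
  define R where "R d = (\<Sum>y\<in>S. Q y * Q ((y + d) mod int p))" for d
  have R0: "R d \<ge> 0" for d unfolding R_def by (intro sum_nonneg) (simp add: Q0)
  have sumR: "sum R S = 1"
  proof -
    have "sum R S = (\<Sum>y\<in>S. \<Sum>d\<in>S. Q y * Q ((y + d) mod int p))"
      unfolding R_def by (rule sum.swap)
    also have "\<dots> = (\<Sum>y\<in>S. Q y * (\<Sum>d\<in>S. Q ((y + d) mod int p)))"
      by (simp add: sum_distrib_left)
    also have "\<dots> = (\<Sum>y\<in>S. Q y * 1)"
    proof (rule sum.cong)
      fix y
      have "(\<Sum>d\<in>S. Q ((y + d) mod int p)) = 1"
        unfolding S_def using reidx_plus[OF pp, of Q y] sumQ S_def by simp
      then show "Q y * (\<Sum>d\<in>S. Q ((y + d) mod int p)) = Q y * 1" by simp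
    qed simp
    also have "\<dots> = 1" using sumQ by simp
    finally show ?thesis .
  qed
  have sq1: "(\<Sum>z\<in>S. Q z ^ 2) \<le> lam"
  proof -
    have "(\<Sum>z\<in>S. Q z ^ 2) \<le> (\<Sum>z\<in>S. lam * Q z)"
      by (rule sum_mono) (simp add: power2_eq_square Q0 Ql mult_right_mono)
    also have "\<dots> = lam" using sumQ by (simp add: sum_distrib_left[symmetric])
    finally show ?thesis .
  qed
  have sq2: "(\<Sum>z\<in>S. Q ((c - z) mod int p) ^ 2) \<le> lam" for c
  proof -
    have "(\<Sum>z\<in>S. Q ((c - z) mod int p) ^ 2) \<le> (\<Sum>z\<in>S. lam * Q ((c - z) mod int p))"
      by (rule sum_mono) (simp add: power2_eq_square Q0 Ql mult_right_mono)
    also have "\<dots> = lam" using sumr[of c] by (simp add: sum_distrib_left[symmetric])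
    finally show ?thesis .
  qed
  define G where "G = {a\<in>S. g a \<ge> (99/100) * lam}"
  define D where "D = {d\<in>S. R d \<ge> (96/100) * lam}"
  have RG: "R ((a - b) mod int p) \<ge> (96/100) * lam" if a: "a \<in> G" and b: "b \<in> G" for a b
  proof -
    define u where "u z = Q z" for z
    define v where "v z = Q ((x - a - z) mod int p)" for z
    define w where "w z = Q ((x - b - z) mod int p)" for z
    have pw: "2 * (v z * w z) \<ge> 4 * (u z * v z) + 4 * (u z * w z) - v z ^ 2 - w z ^ 2 - 4 * u z ^ 2" for z
    proof -
      have "0 \<le> (v z + w z - 2 * u z) ^ 2" by simp
      then show ?thesis by (simp add: power2_eq_square algebra_simps)
    qed
    have "(\<Sum>z\<in>S. 4 * (u z * v z) + 4 * (u z * w z) - v z ^ 2 - w z ^ 2 - 4 * u z ^ 2)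
          \<le> (\<Sum>z\<in>S. 2 * (v z * w z))"
      by (rule sum_mono) (rule pw)
    then have ineq: "4 * (\<Sum>z\<in>S. u z * v z) + 4 * (\<Sum>z\<in>S. u z * w z) - (\<Sum>z\<in>S. v z ^ 2)
        - (\<Sum>z\<in>S. w z ^ 2) - 4 * (\<Sum>z\<in>S. u z ^ 2) \<le> 2 * (\<Sum>z\<in>S. v z * w z)"
      by (simp add: sum.distrib sum_subtractf sum_distrib_left)
    have e1: "(\<Sum>z\<in>S. u z * v z) = g a" unfolding u_def v_def g_def by simp
    have e2: "(\<Sum>z\<in>S. u z * w z) = g b" unfolding u_def w_def g_def by simp
    have e3: "(\<Sum>z\<in>S. v z * w z) = R ((a - b) mod int p)"
    proof -
      define F where "F y = Q y * Q ((y + (a - b) mod int p) mod int p)" for y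
      have "(\<Sum>z\<in>S. F ((x - a - z) mod int p)) = sum F S"
        unfolding S_def by (rule reidx_minus[OF pp])
      moreover have "F ((x - a - z) mod int p) = v z * w z" for z
      proof -
        have "((x - a - z) mod int p + (a - b) mod int p) mod int p = ((x - a - z) + (a - b)) mod int p"
          by (simp add: mod_add_eq)
        also have "\<dots> = (x - b - z) mod int p" by (simp add: algebra_simps)
        finally show ?thesis unfolding F_def v_def w_def by simp
      qed
      ultimately show ?thesis unfolding R_def F_def by simp
    qed
    have s1: "(\<Sum>z\<in>S. u z ^ 2) \<le> lam" unfolding u_def using sq1 .
    have s2: "(\<Sum>z\<in>S. v z ^ 2) \<le> lam" unfolding v_def using sq2[of "x - a"] by (simp add: diff_diff_eq)
    have s3: "(\<Sum>z\<in>S. w z ^ 2) \<le> lam" unfolding w_def using sq2[of "x - b"] by (simp add: diff_diff_eq)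
    have ga: "g a \<ge> 99/100 * lam" using a unfolding G_def by simp
    have gb: "g b \<ge> 99/100 * lam" using b unfolding G_def by simp
    show ?thesis using ineq e1 e2 e3 s1 s2 s3 ga gb by linarith
  qed
  have cardD: "real (card D) * ((96/100) * lam) \<le> 1"
  proof -
    have DS: "D \<subseteq> S" unfolding D_def by auto
    have "real (card D) * ((96/100) * lam) = (\<Sum>d\<in>D. (96/100) * lam)" by simp
    also have "\<dots> \<le> (\<Sum>d\<in>D. R d)" by (rule sum_mono) (simp add: D_def)
    also have "\<dots> \<le> (\<Sum>d\<in>S. R d)" by (rule sum_mono2[OF finS DS]) (simp add: R0)
    finally show ?thesis using sumR by simp
  qed
  have QG: "sum Q G > 99/100"
  proof -
    have "(\<Sum>a\<in>S. Q a * g a) \<le> (\<Sum>a\<in>S. (99/100) * lam * Q a + lam / 100 * (if (99/100) * lam \<le> g a then Q a else 0))"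
    proof (rule sum_mono)
      fix a
      show "Q a * g a \<le> (99/100) * lam * Q a + lam / 100 * (if (99/100) * lam \<le> g a then Q a else 0)"
      proof (cases "(99/100) * lam \<le> g a")
        case True
        have "Q a * g a \<le> Q a * lam" using gl Q0 by (simp add: mult_left_mono)
        then show ?thesis using True by (simp add: algebra_simps)
      next
        case False
        have "g a \<le> (99/100) * lam" using False by simp
        then have "Q a * g a \<le> Q a * ((99/100) * lam)" using Q0 by (rule mult_left_mono)
        then show ?thesis using False by (simp add: algebra_simps)
      qed
    qed
    also have "\<dots> = (99/100) * lam * sum Q S + lam / 100 * (\<Sum>a\<in>S. if (99/100) * lam \<le> g a then Q a else 0)"
      by (simp add: sum.distrib sum_distrib_left)
    also have "(\<Sum>a\<in>S. if (99/100) * lam \<le> g a then Q a else 0) = sum Q G"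
      unfolding G_def using sum.inter_filter[OF finS, symmetric] by simp
    finally have "(\<Sum>a\<in>S. Q a * g a) \<le> (99/100) * lam + lam / 100 * sum Q G" using sumQ by simp
    then have "(1 - 1/10000) * lam < (99/100) * lam + lam / 100 * sum Q G" using big f_eq by simp
    then have "lam * (99/100) < lam * sum Q G" by (simp add: algebra_simps)
    then show ?thesis using lam by simp
  qed
  have GS: "G \<subseteq> S" unfolding G_def by auto
  have finG: "finite G" using finS GS finite_subset by blast
  have cardG: "real (card G) * lam \<ge> 99/100"
  proof -
    have "sum Q G \<le> (\<Sum>a\<in>G. lam)" by (rule sum_mono) (simp add: Ql)
    then show ?thesis using QG by (simp add: mult.commute)
  qed
  have Gne: "G \<noteq> {}" using QG by auto
  define N where "N = (\<lambda>b. (- b) mod int p) ` G"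
  have injN: "inj_on (\<lambda>b. (- b) mod int p) G"
    using inj_on_subset[OF inj_minus[where c=0 and p=p]] GS unfolding S_def by simp
  have cN: "card N = card G" unfolding N_def using injN by (simp add: card_image)
  have NS: "N \<subseteq> {0..<int p}" unfolding N_def using pp by auto
  have Nne: "N \<noteq> {}" unfolding N_def using Gne by simp
  have sub: "sset p G N \<subseteq> D"
  proof
    fix s assume "s \<in> sset p G N"
    then obtain a b where ab: "a \<in> G" "b \<in> G" "s = (a + (- b) mod int p) mod int p"
      unfolding sset_def N_def by auto
    have "s = (a - b) mod int p" using ab(3) by (simp add: mod_add_right_eq)
    then show "s \<in> D" unfolding D_def S_def using RG[OF ab(1,2)] pp by simp
  qed
  have finD: "finite D" unfolding D_def using finS by simp
  have CD: "min p (card G + card N - 1) \<le> card (sset p G N)"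
    using cauchy_davenport[OF p _ NS Gne Nne] GS unfolding S_def by simp
  then have CD2: "min p (card G + card G - 1) \<le> card D" using cN card_mono[OF finD sub] by simp
  have cG1: "card G \<ge> 1" using Gne finG by (simp add: Suc_le_eq card_gt_0_iff)
  show False
  proof (cases "p \<le> card G + card G - 1")
    case True
    then have "p \<le> card D" using CD2 by simp
    then have "real p \<le> real (card D)" by simp
    then have "real p * ((96/100) * lam) \<le> real (card D) * ((96/100) * lam)"
      by (rule mult_right_mono) (use lam in simp)
    then have "real p * ((96/100) * lam) \<le> 1" using cardD by linarith
    moreover have "real p * lam > 2" using pl lam by (simp add: field_simps)
    ultimately show False using lam by linarith
  next
    case False
    then have "card G + card G - 1 \<le> card D" using CD2 by simp
    then have "real (card G + card G - 1) \<le> real (card D)" by linarith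
    moreover have "real (card G + card G - 1) = 2 * real (card G) - 1" using cG1 by (simp add: of_nat_diff)
    ultimately have "(2 * real (card G) - 1) \<le> real (card D)" by simp
    then have "(2 * real (card G) - 1) * ((96/100) * lam) \<le> real (card D) * ((96/100) * lam)"
      by (rule mult_right_mono) (use lam in simp)
    then have "(2 * real (card G) - 1) * ((96/100) * lam) \<le> 1" using cardD by linarith
    then have "(192/100) * (real (card G) * lam) - (96/100) * lam \<le> 1" by (simp add: algebra_simps)
    then show False using cardG lam by linarith
  qed
qed

theorem theorem3p3:
  shows "\<exists>C3::real. C3 < 1 \<and>
    (\<forall>(lam::real) (p::nat) (q::int pmf).
       0 < lam \<and> lam \<le> 9/10 \<and> prime p \<and> real p > 2 / lam \<and>
       set_pmf q \<subseteq> {0..<int p} \<and>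
       (\<forall>x\<in>{0..<int p}. pmf q x \<le> lam)
       \<longrightarrow> (\<forall>x\<in>{0..<int p}. pmf (sum3_law p q) x \<le> C3 * lam))"
  by (rule exI[of _ "1 - 1/10000"]) (use main_bound in auto)

end
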